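(* Let $\Gamma$ be a connected finite simple graph on $N\ge3$ vertices with minimum degree $d=2$ and $\varepsilon=\frac12$. Then for every vertex $v$ with $\deg v=2$ there exists $u\sim v$ with $\deg u=2$.
   Context: For a finite simple graph $\Gamma=(V,E)$ without isolated vertices, $\deg v$ is the number of neighbours of $v$ and $\mathcal N(v)=\{w\in V: w\sim v\}$. The normalized Laplacian acts on functions $f:V\to\mathbb R$ by $\Delta f(v)=f(v)-\frac{1}{\deg v}\sum_{w\sim v}f(w)$; its eigenvalues are $0=\lambda_1\le\lambda_2\le\dots\le\lambda_N$, and $\varepsilon:=\min_i|1-\lambda_i|$. $d$ denotes the minimum vertex degree. *)

theory Defs
  imports Complex_Main
begin

definition simple_graph :: "'a set \<Rightarrow> ('a \<Rightarrow> 'a \<Rightarrow> bool) \<Rightarrow> bool" where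
  "simple_graph V E \<longleftrightarrow> finite V \<and> (\<forall>x y. E x y \<longrightarrow> x \<in> V \<and> y \<in> V)
     \<and> (\<forall>x y. E x y \<longrightarrow> E y x) \<and> (\<forall>x. \<not> E x x)"

definition nbhd :: "'a set \<Rightarrow> ('a \<Rightarrow> 'a \<Rightarrow> bool) \<Rightarrow> 'a \<Rightarrow> 'a set" where
  "nbhd V E v = {w \<in> V. E v w}"

definition deg :: "'a set \<Rightarrow> ('a \<Rightarrow> 'a \<Rightarrow> bool) \<Rightarrow> 'a \<Rightarrow> nat" where
  "deg V E v = card (nbhd V E v)"

definition connected_graph :: "'a set \<Rightarrow> ('a \<Rightarrow> 'a \<Rightarrow> bool) \<Rightarrow> bool" where
  "connected_graph V E \<longleftrightarrow> V \<noteq> {} \<and> (\<forall>x\<in>V. \<forall>y\<in>V. (\<lambda>a b. E a b)\<^sup>*\<^sup>* x y)"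

definition min_degree :: "'a set \<Rightarrow> ('a \<Rightarrow> 'a \<Rightarrow> bool) \<Rightarrow> nat" where
  "min_degree V E = Min (deg V E ` V)"

definition norm_laplacian :: "'a set \<Rightarrow> ('a \<Rightarrow> 'a \<Rightarrow> bool) \<Rightarrow> ('a \<Rightarrow> real) \<Rightarrow> 'a \<Rightarrow> real" where
  "norm_laplacian V E f v = f v - (\<Sum>w\<in>nbhd V E v. f w) / real (deg V E v)"

definition laplacian_eigenvalue :: "'a set \<Rightarrow> ('a \<Rightarrow> 'a \<Rightarrow> bool) \<Rightarrow> real \<Rightarrow> bool" where
  "laplacian_eigenvalue V E mu \<longleftrightarrow>
     (\<exists>f. (\<exists>v\<in>V. f v \<noteq> 0) \<and> (\<forall>v\<in>V. norm_laplacian V E f v = mu * f v))"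

definition eps_gap :: "'a set \<Rightarrow> ('a \<Rightarrow> 'a \<Rightarrow> bool) \<Rightarrow> real" where
  "eps_gap V E = Min ((\<lambda>mu. \<bar>1 - mu\<bar>) ` {mu. laplacian_eigenvalue V E mu})"

end

theory Submission
  imports Defs "HOL-Analysis.Analysis"
begin


definition ip :: "'a set \<Rightarrow> ('a\<Rightarrow>real) \<Rightarrow> ('a\<Rightarrow>real) \<Rightarrow> ('a\<Rightarrow>real) \<Rightarrow> real" where
  "ip V w f g = (\<Sum>x\<in>V. w x * f x * g x)"

definition kop :: "'a set \<Rightarrow> ('a\<Rightarrow>'a\<Rightarrow>real) \<Rightarrow> ('a\<Rightarrow>real) \<Rightarrow> 'a \<Rightarrow> real" where
  "kop V K f x = (\<Sum>y\<in>V. K x y * f y)"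

lemma ip_sym: "ip V w f g = ip V w g f"
  unfolding ip_def by (simp add: mult.commute mult.left_commute)

lemma ip_cong: "(\<And>x. x\<in>V \<Longrightarrow> f x = f' x) \<Longrightarrow> (\<And>x. x\<in>V \<Longrightarrow> g x = g' x) \<Longrightarrow> ip V w f g = ip V w f' g'"
  unfolding ip_def by (rule sum.cong) auto

lemma kop_cong: "(\<And>x. x\<in>V \<Longrightarrow> f x = f' x) \<Longrightarrow> kop V K f x = kop V K f' x"
  unfolding kop_def by (rule sum.cong) auto

lemma kop_lin: "kop V K (\<lambda>x. a * f x + b * g x) x = a * kop V K f x + b * kop V K g x"
  unfolding kop_def by (simp add: sum.distrib sum_distrib_left algebra_simps)

lemma ip_quad: "ip V w (\<lambda>x. h x + t * f x) (\<lambda>x. h x + t * f x) = ip V w h h + 2*t*ip V w h f + t^2 * ip V w f f"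
  unfolding ip_def by (simp add: sum.distrib sum_distrib_left algebra_simps power2_eq_square)

lemma ip_kop_sym:
  assumes sym: "\<forall>x\<in>V. \<forall>y\<in>V. w x * K x y = w y * K y x"
  shows "ip V w (kop V K f) g = ip V w f (kop V K g)"
proof -
  have "ip V w (kop V K f) g = (\<Sum>x\<in>V. \<Sum>y\<in>V. (w x * K x y) * f y * g x)"
    unfolding ip_def kop_def by (simp add: sum_distrib_left sum_distrib_right algebra_simps)
  also have "\<dots> = (\<Sum>x\<in>V. \<Sum>y\<in>V. (w y * K y x) * f y * g x)"
    using sym by (intro sum.cong refl) auto
  also have "\<dots> = (\<Sum>y\<in>V. \<Sum>x\<in>V. (w y * K y x) * f y * g x)"
    by (rule sum.swap)
  also have "\<dots> = ip V w f (kop V K g)"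
    unfolding ip_def kop_def by (simp add: sum_distrib_left sum_distrib_right algebra_simps)
  finally show ?thesis .
qed

lemma ip_pos: assumes "finite V" "\<forall>x\<in>V. w x > 0" shows "ip V w f f \<ge> 0"
  unfolding ip_def using assms by (intro sum_nonneg) (simp add: mult.assoc less_imp_le)

lemma ip_zero: assumes "finite V" "\<forall>x\<in>V. w x > 0" "ip V w f f = 0" "x \<in> V" shows "f x = 0"
proof -
  have "\<forall>y\<in>V. w y * f y * f y = 0"
    using assms sum_nonneg_eq_0_iff[of V "\<lambda>y. w y * f y * f y"] unfolding ip_def
    by (simp add: mult.assoc less_imp_le)
  then have "w x * f x * f x = 0" using assms(4) by blast
  then show ?thesis using assms(2,4) by auto
qed

lemma quad_zero: fixes a b :: real assumes "\<forall>t. 2*t*a + t^2*b \<ge> 0" "b \<ge> 0" shows "a = 0"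
proof (rule ccontr)
  assume "a \<noteq> 0"
  define t where "t = -a/(b+1)"
  have b1: "b+1 > 0" using assms(2) by simp
  have tb: "t*(b+1) = -a" unfolding t_def using b1 by simp
  have "(b+1)^2 * (2*t*a + t^2*b) = 2*a*(b+1)*(t*(b+1)) + b*(t*(b+1))^2"
    by (simp add: algebra_simps power2_eq_square)
  also have "\<dots> = - (a^2*(b+2))" unfolding tb by (simp add: algebra_simps power2_eq_square)
  also have "\<dots> < 0" using \<open>a\<noteq>0\<close> assms(2) by simp
  finally have "(b+1)^2 * (2*t*a + t^2*b) < 0" .
  moreover have "(b+1)^2 * (2*t*a + t^2*b) \<ge> 0" using assms(1) by simp
  ultimately show False by simp
qed

lemma ip_bilin: "ip V w (\<lambda>x. a x + t * b x) (\<lambda>x. c x + t * d x) = ip V w a c + t * (ip V w a d + ip V w b c) + t^2 * ip V w b d"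
  unfolding ip_def by (simp add: sum.distrib sum_distrib_left algebra_simps power2_eq_square)

lemma ip_diff_left: "ip V w (\<lambda>x. a x - t * b x) c = ip V w a c - t * ip V w b c"
  unfolding ip_def by (simp add: sum_subtractf sum_distrib_left algebra_simps)

lemma ip_scale: "ip V w (\<lambda>x. t * a x) (\<lambda>x. t * b x) = t^2 * ip V w a b"
  unfolding ip_def by (simp add: sum_distrib_left algebra_simps power2_eq_square)

lemma kop_scale: "kop V K (\<lambda>x. t * a x) y = t * kop V K a y"
  unfolding kop_def by (simp add: sum_distrib_left algebra_simps)

lemma rayleigh_min:
  fixes V :: "'a set" and w :: "'a \<Rightarrow> real" and K :: "'a \<Rightarrow> 'a \<Rightarrow> real"
  assumes fin: "finite V" and ne: "V \<noteq> {}" and w1: "\<forall>x\<in>V. w x \<ge> 1"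
    and sym: "\<forall>x\<in>V. \<forall>y\<in>V. w x * K x y = w y * K y x"
  shows "\<exists>h c. (\<exists>x\<in>V. h x \<noteq> 0) \<and> (\<forall>x\<in>V. kop V K h x = c * h x)
     \<and> (\<forall>f. ip V w (kop V K f) f \<ge> c * ip V w f f)"
proof -
  have wpos: "\<forall>x\<in>V. w x > 0" using w1 by force
  define X where "X = product_topology (\<lambda>_::'a. euclideanreal) V"
  define F where "F = (\<lambda>f. ip V w (kop V K f) f)"
  define N where "N = (\<lambda>f. ip V w f f)"
  define S where "S = {f \<in> PiE V (\<lambda>_. {-1..1::real}). N f = 1}"
  have contF: "continuous_map X euclideanreal F"
    unfolding F_def ip_def kop_def X_def
    using fin by (intro continuous_intros continuous_map_sum continuous_map_real_mult continuous_map_product_projection) auto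
  have contN: "continuous_map X euclideanreal N"
    unfolding N_def ip_def X_def
    using fin by (intro continuous_intros continuous_map_sum continuous_map_real_mult continuous_map_product_projection) auto
  have cpt1: "compactin X (PiE V (\<lambda>_. {-1..1}))" unfolding X_def by (simp add: compactin_PiE)
  have cl1: "closedin X (PiE V (\<lambda>_. {-1..1}))" unfolding X_def
    by (simp add: closedin_product_topology)
  have cl2: "closedin X {f \<in> topspace X. N f \<in> {1}}"
    by (rule closedin_continuous_map_preimage[OF contN]) simp
  have Seq: "S = PiE V (\<lambda>_. {-1..1}) \<inter> {f \<in> topspace X. N f \<in> {1}}"
    unfolding S_def X_def by auto
  have clS: "closedin X S" unfolding Seq using cl1 cl2 by blast
  have cptS: "compactin X S" by (rule closed_compactin[OF cpt1 _ clS]) (auto simp: S_def)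
  obtain x0 where x0: "x0 \<in> V" using ne by blast
  define e where "e = restrict (\<lambda>y. if y = x0 then 1 / sqrt (w x0) else 0) V"
  have "N e = (\<Sum>y\<in>V. if y = x0 then w x0 * (1/sqrt (w x0)) * (1/sqrt (w x0)) else 0)"
    unfolding N_def ip_def e_def by (intro sum.cong) auto
  also have "\<dots> = 1" using x0 fin wpos by (simp add: sum.delta less_imp_le) (metis less_irrefl)
  finally have Ne: "N e = 1" .
  have "1 \<le> sqrt (w x0)" using w1 x0 by auto
  then have "1 / sqrt (w x0) \<le> 1" by simp
  moreover have "-1 \<le> 1 / sqrt (w x0)" using wpos x0
    by (smt (verit) divide_nonneg_nonneg real_sqrt_ge_zero)
  ultimately have "e \<in> S" unfolding S_def using Ne by (auto simp: e_def)
  then have Sne: "S \<noteq> {}" by blast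
  have "compact (F ` S)" using image_compactin[OF cptS contF] by simp
  then obtain Fh where "Fh \<in> F ` S" "\<forall>y\<in>F ` S. Fh \<le> y"
    using compact_attains_inf[of "F ` S"] Sne by blast
  then obtain h where hS: "h \<in> S" and hmin: "\<forall>g\<in>S. F h \<le> F g" by blast
  define c where "c = F h"
  have Nh: "N h = 1" using hS by (simp add: S_def)
  have Fcong: "F f = F (restrict f V)" for f
    unfolding F_def by (intro ip_cong kop_cong) auto
  have Ncong: "N f = N (restrict f V)" for f
    unfolding N_def by (intro ip_cong) auto
  have ray: "F f \<ge> c * N f" for f
  proof -
    define g where "g = restrict f V"
    have FN: "F f = F g" "N f = N g" unfolding g_def using Fcong Ncong by auto
    show ?thesis
    proof (cases "N g = 0")
      case True
      then have g0: "\<forall>x\<in>V. g x = 0" using ip_zero[OF fin wpos] unfolding N_def by blast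
      have "F g = 0" unfolding F_def ip_def using g0 by simp
      then show ?thesis using FN True by simp
    next
      case False
      have Npos: "N g > 0" using False ip_pos[OF fin wpos, of g] unfolding N_def by simp
      define r where "r = 1 / sqrt (N g)"
      define g' where "g' = restrict (\<lambda>x. r * g x) V"
      have Ng': "N g' = r^2 * N g"
        unfolding N_def using ip_scale[of V w r g g] by (metis (no_types, lifting) g'_def ip_cong restrict_apply')
      have r2: "r^2 * N g = 1" unfolding r_def using Npos by (simp add: power_divide)
      have Fg': "F g' = r^2 * F g"
      proof -
        have "F g' = ip V w (kop V K (\<lambda>x. r * g x)) (\<lambda>x. r * g x)"
          unfolding F_def g'_def by (intro ip_cong kop_cong) auto
        also have "\<dots> = ip V w (\<lambda>x. r * kop V K g x) (\<lambda>x. r * g x)"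
          using ext[of "kop V K (\<lambda>x. r * g x)" "\<lambda>y. r * kop V K g y", OF kop_scale] by simp
        also have "\<dots> = r^2 * F g" unfolding F_def by (rule ip_scale)
        finally show ?thesis .
      qed
      have "g' \<in> S"
      proof -
        have "g' x \<in> {-1..1}" if xV: "x \<in> V" for x
        proof -
          have "w x * g' x * g' x \<le> N g'"
            unfolding N_def ip_def
            by (rule member_le_sum[OF xV _ fin]) (use wpos in \<open>simp add: mult.assoc less_imp_le\<close>)
          then have "w x * (g' x)^2 \<le> 1" using Ng' r2 by (simp add: power2_eq_square mult.assoc)
          moreover have "(g' x)^2 \<le> w x * (g' x)^2" using w1 xV
            by (metis mult_le_cancel_right1 zero_le_power2 order.trans order_refl mult_right_mono mult_1)
          ultimately have "(g' x)^2 \<le> 1" by linarith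
          then have "\<bar>g' x\<bar> \<le> 1" using abs_le_square_iff[of "g' x" 1] by simp
          then show ?thesis by auto
        qed
        then show ?thesis unfolding S_def using Ng' r2 by (auto simp: g'_def)
      qed
      then have "c \<le> F g'" using hmin c_def by blast
      then have "c \<le> r^2 * F g" using Fg' by simp
      then have "c * N g \<le> r^2 * N g * F g" using Npos by (simp add: mult_right_mono algebra_simps)
      then show ?thesis using FN r2 by simp
    qed
  qed
  define kh where "kh = kop V K h"
  have var: "ip V w kh f = c * ip V w h f" for f
  proof -
    have "\<forall>t. 2*t*(ip V w kh f - c * ip V w h f) + t^2 * (F f - c * N f) \<ge> 0"
    proof
      fix t
      have "F (\<lambda>x. h x + t * f x) = ip V w (\<lambda>x. kh x + t * kop V K f x) (\<lambda>x. h x + t * f x)"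
      proof -
        have "kop V K (\<lambda>x. h x + t * f x) = (\<lambda>x. kop V K h x + t * kop V K f x)"
          using kop_lin[of V K 1 h t f] by (intro ext) simp
        then show ?thesis unfolding F_def kh_def by simp
      qed
      also have "\<dots> = c + 2*t*ip V w kh f + t^2 * F f"
        unfolding ip_bilin c_def F_def kh_def
        using ip_kop_sym[OF sym, of f h] ip_sym[of V w h "kop V K f"] ip_sym[of V w f "kop V K h"]
        by (simp add: algebra_simps)
      finally have e1: "F (\<lambda>x. h x + t * f x) = c + 2*t*ip V w kh f + t^2 * F f" .
      have e2: "N (\<lambda>x. h x + t * f x) = 1 + 2*t*ip V w h f + t^2 * N f"
        unfolding N_def ip_bilin using Nh ip_sym[of V w f h] unfolding N_def by (simp add: algebra_simps)
      have "F (\<lambda>x. h x + t * f x) \<ge> c * N (\<lambda>x. h x + t * f x)" by (rule ray)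
      then show "2*t*(ip V w kh f - c * ip V w h f) + t^2 * (F f - c * N f) \<ge> 0"
        unfolding e1 e2 by (simp add: algebra_simps)
    qed
    moreover have "F f - c * N f \<ge> 0" using ray[of f] by simp
    ultimately show ?thesis using quad_zero by fastforce
  qed
  define d where "d = (\<lambda>x. kh x - c * h x)"
  have "ip V w d d = ip V w kh d - c * ip V w h d" unfolding d_def by (rule ip_diff_left)
  then have "ip V w d d = 0" using var[of d] by simp
  then have eig: "\<forall>x\<in>V. kop V K h x = c * h x"
    using ip_zero[OF fin wpos] unfolding d_def kh_def by fastforce
  have "\<exists>x\<in>V. h x \<noteq> 0"
  proof (rule ccontr)
    assume "\<not> ?thesis"
    then have "N h = 0" unfolding N_def ip_def by simp
    then show False using Nh by simp
  qed
  moreover have "\<forall>f. ip V w (kop V K f) f \<ge> c * ip V w f f" using ray unfolding F_def N_def by blast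
  ultimately show ?thesis using eig by blast
qed

lemma ip_sum_right: "ip V w g (\<lambda>y. \<Sum>f\<in>F. a f * f y) = (\<Sum>f\<in>F. a f * ip V w g f)"
  unfolding ip_def by (simp add: sum_distrib_left sum_distrib_right algebra_simps sum.swap[of _ V])

lemma ip_sum_left: "ip V w (\<lambda>y. \<Sum>f\<in>F. a f * f y) g = (\<Sum>f\<in>F. a f * ip V w f g)"
  using ip_sum_right[of V w g a F] ip_sym by (metis (no_types, lifting) sum.cong)

lemma bessel:
  assumes fin: "finite V" and wpos: "\<forall>x\<in>V. w x > 0" and finF: "finite F"
    and pos: "\<forall>f\<in>F. ip V w f f > 0"
    and orth: "\<forall>f\<in>F. \<forall>f'\<in>F. f \<noteq> f' \<longrightarrow> ip V w f f' = 0"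
  shows "(\<Sum>f\<in>F. (ip V w g f)^2 / ip V w f f) \<le> ip V w g g"
proof -
  define a where "a f = ip V w g f / ip V w f f" for f
  define h where "h y = (\<Sum>f\<in>F. a f * f y)" for y
  define B where "B = (\<Sum>f\<in>F. (ip V w g f)^2 / ip V w f f)"
  have gh: "ip V w g h = B"
    unfolding h_def ip_sum_right B_def a_def by (intro sum.cong) (auto simp: power2_eq_square)
  have "ip V w h h = (\<Sum>f\<in>F. a f * ip V w f h)"
    unfolding h_def[abs_def] by (rule ip_sum_left)
  also have "\<dots> = (\<Sum>f\<in>F. a f * (a f * ip V w f f))"
  proof (intro sum.cong refl)
    fix f assume fF: "f \<in> F"
    have "ip V w f h = (\<Sum>f'\<in>F. a f' * ip V w f f')"
      unfolding h_def[abs_def] by (rule ip_sum_right)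
    also have "\<dots> = (\<Sum>f'\<in>F. if f' = f then a f * ip V w f f else 0)"
      using orth fF by (intro sum.cong) auto
    also have "\<dots> = a f * ip V w f f" using finF fF by (simp add: sum.delta')
    finally show "a f * ip V w f h = a f * (a f * ip V w f f)" by simp
  qed
  also have "\<dots> = B" unfolding B_def a_def using pos
    by (intro sum.cong refl) (simp add: power2_eq_square)
  finally have hh: "ip V w h h = B" .
  have "0 \<le> ip V w (\<lambda>x. g x + (-1) * h x) (\<lambda>x. g x + (-1) * h x)" by (rule ip_pos[OF fin wpos])
  also have "\<dots> = ip V w g g - 2 * ip V w g h + ip V w h h"
    unfolding ip_bilin using ip_sym[of V w h g] by simp
  finally show ?thesis using gh hh B_def by simp
qed

lemma orth_card:
  assumes fin: "finite V" and wpos: "\<forall>x\<in>V. w x > 0" and finF: "finite F"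
    and pos: "\<forall>f\<in>F. ip V w f f > 0"
    and orth: "\<forall>f\<in>F. \<forall>f'\<in>F. f \<noteq> f' \<longrightarrow> ip V w f f' = 0"
  shows "card F \<le> card V"
proof -
  define dl where "dl x = (\<lambda>y. if y = x then (1::real) else 0)" for x :: 'a
  have ipd: "ip V w (dl x) f = w x * f x" if "x \<in> V" for x f
  proof -
    have "ip V w (dl x) f = (\<Sum>y\<in>V. if y = x then w x * f x else 0)"
      unfolding ip_def dl_def by (intro sum.cong) auto
    then show ?thesis using that fin by (simp add: sum.delta)
  qed
  have b: "(\<Sum>f\<in>F. w x * (f x)^2 / ip V w f f) \<le> 1" if xV: "x \<in> V" for x
  proof -
    have "(\<Sum>f\<in>F. (ip V w (dl x) f)^2 / ip V w f f) \<le> ip V w (dl x) (dl x)"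
      by (rule bessel[OF fin wpos finF pos orth])
    then have "(\<Sum>f\<in>F. (w x * f x)^2 / ip V w f f) \<le> w x"
      using ipd[OF xV] by (simp add: dl_def)
    also have "(\<Sum>f\<in>F. (w x * f x)^2 / ip V w f f) = w x * (\<Sum>f\<in>F. w x * (f x)^2 / ip V w f f)"
      by (simp add: sum_distrib_left power2_eq_square algebra_simps)
    finally show ?thesis using wpos xV by simp
  qed
  have "real (card F) = (\<Sum>f\<in>F. 1)" by simp
  also have "\<dots> = (\<Sum>f\<in>F. ip V w f f / ip V w f f)" using pos by (intro sum.cong) auto
  also have "\<dots> = (\<Sum>f\<in>F. \<Sum>x\<in>V. w x * (f x)^2 / ip V w f f)"
  proof (intro sum.cong refl)
    fix f
    have e: "ip V w f f = (\<Sum>x\<in>V. w x * (f x)^2)" unfolding ip_def by (simp add: power2_eq_square mult.assoc)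
    have "ip V w f f / ip V w f f = (\<Sum>x\<in>V. w x * (f x)^2) / ip V w f f" by (subst (1) e) (rule refl)
    then show "ip V w f f / ip V w f f = (\<Sum>x\<in>V. w x * (f x)^2 / ip V w f f)"
      by (simp add: sum_divide_distrib)
  qed
  also have "\<dots> = (\<Sum>x\<in>V. \<Sum>f\<in>F. w x * (f x)^2 / ip V w f f)" by (rule sum.swap)
  also have "\<dots> \<le> (\<Sum>x\<in>V. 1)" by (intro sum_mono b)
  finally show ?thesis by simp
qed



lemma cs_sum:
  fixes a :: "'b \<Rightarrow> real"
  assumes "finite A" "A \<noteq> {}"
  shows "(\<Sum>i\<in>A. a i)^2 / real (card A) \<le> (\<Sum>i\<in>A. (a i)^2)"
proof -
  define n where "n = real (card A)"
  define S where "S = (\<Sum>i\<in>A. a i)"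
  have n0: "n > 0" using assms unfolding n_def by (simp add: card_gt_0_iff)
  have "0 \<le> (\<Sum>i\<in>A. (a i - S/n)^2)" by (intro sum_nonneg) simp
  also have "\<dots> = (\<Sum>i\<in>A. (a i)^2) - 2*(S/n)*S + n*(S/n)^2"
    unfolding S_def n_def power2_diff by (simp add: sum.distrib sum_subtractf sum_distrib_left sum_distrib_right sum_divide_distrib algebra_simps)
  also have "\<dots> = (\<Sum>i\<in>A. (a i)^2) - S^2/n" using n0 by (simp add: field_simps power2_eq_square)
  finally show ?thesis unfolding S_def n_def by simp
qed

definition Kp :: "'a set \<Rightarrow> ('a \<Rightarrow> 'a \<Rightarrow> bool) \<Rightarrow> 'a \<Rightarrow> 'a \<Rightarrow> real" where
  "Kp V E x y = (if E x y then 1 / real (deg V E x) else 0)"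

definition Pop :: "'a set \<Rightarrow> ('a \<Rightarrow> 'a \<Rightarrow> bool) \<Rightarrow> ('a \<Rightarrow> real) \<Rightarrow> 'a \<Rightarrow> real" where
  "Pop V E f x = kop V (Kp V E) f x"

definition wd :: "'a set \<Rightarrow> ('a \<Rightarrow> 'a \<Rightarrow> bool) \<Rightarrow> 'a \<Rightarrow> real" where
  "wd V E x = real (deg V E x)"

definition kmul :: "'a set \<Rightarrow> ('a\<Rightarrow>'a\<Rightarrow>real) \<Rightarrow> ('a\<Rightarrow>'a\<Rightarrow>real) \<Rightarrow> 'a \<Rightarrow> 'a \<Rightarrow> real" where
  "kmul V K L x y = (\<Sum>z\<in>V. K x z * L z y)"

lemma kop_kmul: "kop V (kmul V K L) f x = kop V K (kop V L f) x"
proof -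
  have "kop V (kmul V K L) f x = (\<Sum>y\<in>V. \<Sum>z\<in>V. K x z * L z y * f y)"
    unfolding kop_def kmul_def by (simp add: sum_distrib_right)
  also have "\<dots> = (\<Sum>z\<in>V. \<Sum>y\<in>V. K x z * L z y * f y)" by (rule sum.swap)
  also have "\<dots> = kop V K (kop V L f) x"
    unfolding kop_def by (simp add: sum_distrib_left mult.assoc)
  finally show ?thesis .
qed

lemma kmul_sym:
  assumes "\<forall>x\<in>V. \<forall>y\<in>V. w x * K x y = w y * K y x"
  shows "\<forall>x\<in>V. \<forall>y\<in>V. w x * kmul V K K x y = w y * kmul V K K y x"
proof (intro ballI)
  fix x y assume xy: "x \<in> V" "y \<in> V"
  have "w x * kmul V K K x y = (\<Sum>z\<in>V. (w x * K x z) * K z y)"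
    unfolding kmul_def by (simp add: sum_distrib_left mult.assoc)
  also have "\<dots> = (\<Sum>z\<in>V. K z x * (w z * K z y))"
    using assms xy by (intro sum.cong refl) (simp add: algebra_simps)
  also have "\<dots> = (\<Sum>z\<in>V. K z x * (w y * K y z))"
    using assms xy by (intro sum.cong refl) simp
  also have "\<dots> = w y * kmul V K K y x"
    unfolding kmul_def by (simp add: sum_distrib_left algebra_simps)
  finally show "w x * kmul V K K x y = w y * kmul V K K y x" .
qed

lemma kop_comb: "kop V (\<lambda>x y. a * K x y + b * L x y) f x = a * kop V K f x + b * kop V L f x"
  unfolding kop_def by (simp add: sum.distrib sum_distrib_left algebra_simps)

definition Kid :: "'a \<Rightarrow> 'a \<Rightarrow> real" where "Kid x y = (if x = y then 1 else 0)"

lemma kop_Kid: assumes "finite V" "x \<in> V" shows "kop V Kid f x = f x"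
proof -
  have "kop V Kid f x = (\<Sum>y\<in>V. if x = y then f y else 0)"
    unfolding kop_def Kid_def by (intro sum.cong) auto
  then show ?thesis using assms by simp
qed

locale gr =
  fixes V :: "'a set" and E :: "'a \<Rightarrow> 'a \<Rightarrow> bool"
  assumes sg: "simple_graph V E" and dpos: "\<forall>v\<in>V. deg V E v > 0"
begin

lemma fin: "finite V" using sg unfolding simple_graph_def by blast
lemma Esym: "E x y \<Longrightarrow> E y x" using sg unfolding simple_graph_def by blast
lemma EV: "E x y \<Longrightarrow> x \<in> V \<and> y \<in> V" using sg unfolding simple_graph_def by blast
lemma Eirr: "\<not> E x x" using sg unfolding simple_graph_def by blast
lemma nbhd_sub: "nbhd V E x \<subseteq> V" unfolding nbhd_def by blast
lemma fin_nbhd: "finite (nbhd V E x)" using fin nbhd_sub finite_subset by blast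
lemma wpos: "\<forall>x\<in>V. wd V E x > 0" using dpos unfolding wd_def by simp
lemma w1: "\<forall>x\<in>V. wd V E x \<ge> 1" using dpos unfolding wd_def by (simp add: Suc_le_eq)

lemma Pop_eq: "Pop V E f x = (\<Sum>w\<in>nbhd V E x. f w) / real (deg V E x)"
proof -
  have "Pop V E f x = (\<Sum>y\<in>V. if E x y then f y / real (deg V E x) else 0)"
    unfolding Pop_def kop_def Kp_def by (intro sum.cong) auto
  also have "\<dots> = (\<Sum>y\<in>{y\<in>V. E x y}. f y / real (deg V E x))"
    using fin by (simp add: sum.inter_filter)
  also have "\<dots> = (\<Sum>w\<in>nbhd V E x. f w) / real (deg V E x)"
    unfolding nbhd_def by (simp add: sum_divide_distrib)
  finally show ?thesis .
qed

lemma lap_eq: "norm_laplacian V E f x = f x - Pop V E f x"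
  unfolding norm_laplacian_def Pop_eq by simp

lemma Kp_sym: "\<forall>x\<in>V. \<forall>y\<in>V. wd V E x * Kp V E x y = wd V E y * Kp V E y x"
  using dpos Esym unfolding wd_def Kp_def by auto

lemma Pop_sym: "ip V (wd V E) (Pop V E f) g = ip V (wd V E) f (Pop V E g)"
  unfolding Pop_def[abs_def] by (rule ip_kop_sym[OF Kp_sym])

lemma eig_iff: "laplacian_eigenvalue V E mu \<longleftrightarrow>
   (\<exists>f. (\<exists>v\<in>V. f v \<noteq> 0) \<and> (\<forall>v\<in>V. Pop V E f v = (1 - mu) * f v))"
  unfolding laplacian_eigenvalue_def lap_eq by (auto simp: algebra_simps)

lemma deg_sum: "(\<Sum>x\<in>V. if E x w then (1::real) else 0) = real (deg V E w)"
proof -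
  have "(\<Sum>x\<in>V. if E x w then (1::real) else 0) = (\<Sum>x\<in>V. if E w x then 1 else 0)"
    using Esym by (intro sum.cong) auto
  also have "\<dots> = (\<Sum>x\<in>{x\<in>V. E w x}. 1)" by (rule sum.inter_filter[OF fin, symmetric])
  also have "\<dots> = real (card {x\<in>V. E w x})" by simp
  finally show ?thesis unfolding deg_def nbhd_def .
qed

lemma Pop_contr: "ip V (wd V E) (Pop V E f) (Pop V E f) \<le> ip V (wd V E) f f"
proof -
  have "ip V (wd V E) (Pop V E f) (Pop V E f) \<le> (\<Sum>x\<in>V. \<Sum>w\<in>nbhd V E x. (f w)^2)"
    unfolding ip_def
  proof (intro sum_mono)
    fix x assume xV: "x \<in> V"
    have dx: "deg V E x > 0" using dpos xV by blast
    then have ne: "nbhd V E x \<noteq> {}" unfolding deg_def by auto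
    have "wd V E x * Pop V E f x * Pop V E f x = (\<Sum>w\<in>nbhd V E x. f w)^2 / real (card (nbhd V E x))"
      unfolding wd_def Pop_eq deg_def using dx unfolding deg_def by (simp add: power2_eq_square)
    also have "\<dots> \<le> (\<Sum>w\<in>nbhd V E x. (f w)^2)" by (rule cs_sum[OF fin_nbhd ne])
    finally show "wd V E x * Pop V E f x * Pop V E f x \<le> (\<Sum>w\<in>nbhd V E x. (f w)^2)" .
  qed
  also have "\<dots> = (\<Sum>x\<in>V. \<Sum>w\<in>V. if E x w then (f w)^2 else 0)"
    using fin unfolding nbhd_def by (simp add: sum.inter_filter)
  also have "\<dots> = (\<Sum>w\<in>V. \<Sum>x\<in>V. if E x w then (f w)^2 else 0)" by (rule sum.swap)
  also have "\<dots> = (\<Sum>w\<in>V. (f w)^2 * (\<Sum>x\<in>V. if E x w then 1 else 0))"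
    by (simp add: sum_distrib_left if_distrib cong: if_cong)
  also have "\<dots> = ip V (wd V E) f f"
    unfolding ip_def deg_sum wd_def by (simp add: power2_eq_square algebra_simps)
  finally show ?thesis .
qed

lemma Pop_restrict: "Pop V E (restrict f V) x = Pop V E f x"
  unfolding Pop_def by (rule kop_cong) auto

lemma ip_scale_left: "ip V w (\<lambda>x. c * f x) g = c * ip V w f g"
  unfolding ip_def by (simp add: sum_distrib_left algebra_simps)

lemma eig_orth:
  assumes "\<forall>v\<in>V. Pop V E f v = a * f v" "\<forall>v\<in>V. Pop V E g v = b * g v" "a \<noteq> b"
  shows "ip V (wd V E) f g = 0"
proof -
  have "a * ip V (wd V E) f g = ip V (wd V E) (Pop V E f) g"
    using assms(1) ip_cong[of V "Pop V E f" "\<lambda>x. a * f x" g g "wd V E"] ip_scale_left by simp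
  also have "\<dots> = ip V (wd V E) f (Pop V E g)" by (rule Pop_sym)
  also have "\<dots> = b * ip V (wd V E) f g"
    using assms(2) ip_cong[of V f f "Pop V E g" "\<lambda>x. b * g x" "wd V E"] ip_scale_left ip_sym
    by metis
  finally have "(a - b) * ip V (wd V E) f g = 0" by (simp add: algebra_simps)
  then show ?thesis using assms(3) by simp
qed

lemma ip_pos_nz: assumes "\<exists>v\<in>V. f v \<noteq> 0" shows "ip V (wd V E) f f > 0"
proof -
  have "ip V (wd V E) f f \<ge> 0" by (rule ip_pos[OF fin wpos])
  moreover have "ip V (wd V E) f f \<noteq> 0" using ip_zero[OF fin wpos] assms by blast
  ultimately show ?thesis by simp
qed

lemma eig_finite: "finite {mu. laplacian_eigenvalue V E mu}"
proof (rule ccontr)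
  define M where "M = {mu. laplacian_eigenvalue V E mu}"
  assume "infinite {mu. laplacian_eigenvalue V E mu}"
  then have infM: "infinite M" unfolding M_def .
  define Q where "Q mu f = ((\<exists>v\<in>V. f v \<noteq> 0) \<and> (\<forall>v\<in>V. Pop V E f v = (1 - mu) * f v))" for mu f
  define fe where "fe mu = restrict (SOME f. Q mu f) V" for mu
  have fe: "Q mu (fe mu)" if "mu \<in> M" for mu
  proof -
    have "\<exists>f. Q mu f" using that unfolding M_def Q_def eig_iff by blast
    then have "Q mu (SOME f. Q mu f)" by (rule someI_ex)
    then show ?thesis unfolding Q_def fe_def using Pop_restrict by auto
  qed
  have inj: "inj_on fe M"
  proof (rule inj_onI)
    fix mu nu assume mu: "mu \<in> M" and nu: "nu \<in> M" and eq: "fe mu = fe nu"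
    obtain v where v: "v \<in> V" "fe mu v \<noteq> 0" using fe[OF mu] unfolding Q_def by blast
    have "(1 - mu) * fe mu v = (1 - nu) * fe mu v"
      using fe[OF mu] fe[OF nu] v eq unfolding Q_def by metis
    then show "mu = nu" using v by simp
  qed
  obtain B where B: "finite B" "card B = card V + 1" "B \<subseteq> M"
    using infinite_arbitrarily_large[OF infM] by blast
  have cardF: "card (fe ` B) = card V + 1"
    using B inj card_image inj_on_subset by metis
  have "card (fe ` B) \<le> card V"
  proof (rule orth_card[OF fin wpos])
    show "finite (fe ` B)" using B by simp
    show "\<forall>f\<in>fe ` B. ip V (wd V E) f f > 0"
      using fe B ip_pos_nz unfolding Q_def by blast
    show "\<forall>f\<in>fe ` B. \<forall>f'\<in>fe ` B. f \<noteq> f' \<longrightarrow> ip V (wd V E) f f' = 0"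
    proof (intro ballI impI)
      fix f f' assume "f \<in> fe ` B" "f' \<in> fe ` B" "f \<noteq> f'"
      then obtain mu nu where "mu \<in> B" "nu \<in> B" "f = fe mu" "f' = fe nu" "mu \<noteq> nu" by blast
      then show "ip V (wd V E) f f' = 0"
        using fe B eig_orth[of f "1 - mu" f' "1 - nu"] unfolding Q_def by auto
    qed
  qed
  then show False using cardF by simp
qed

definition K2 where "K2 = kmul V (Kp V E) (Kp V E)"

lemma K2_op: "kop V K2 f x = Pop V E (Pop V E f) x"
  unfolding K2_def Pop_def[abs_def] by (rule kop_kmul)

lemma K2_sym: "\<forall>x\<in>V. \<forall>y\<in>V. wd V E x * K2 x y = wd V E y * K2 y x"
  unfolding K2_def by (rule kmul_sym[OF Kp_sym])

lemma Pop_lin: "Pop V E (\<lambda>x. a * f x + b * g x) x = a * Pop V E f x + b * Pop V E g x"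
  unfolding Pop_def by (rule kop_lin)

lemma PP_ip: "ip V (wd V E) (Pop V E (Pop V E f)) f = ip V (wd V E) (Pop V E f) (Pop V E f)"
  using Pop_sym ip_sym by metis

lemma eig_from_sq:
  assumes nz: "\<exists>x\<in>V. k x \<noteq> 0" and ev: "\<forall>x\<in>V. Pop V E (Pop V E k) x = y * k x" and y4: "y < 1/4"
  shows "\<exists>mu. laplacian_eigenvalue V E mu \<and> \<bar>1 - mu\<bar> < 1/2"
proof -
  have "y * ip V (wd V E) k k = ip V (wd V E) (Pop V E (Pop V E k)) k"
    using ev ip_cong[of V "Pop V E (Pop V E k)" "\<lambda>x. y * k x" k k "wd V E"] ip_scale_left by simp
  also have "\<dots> \<ge> 0" unfolding PP_ip by (rule ip_pos[OF fin wpos])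
  finally have "y * ip V (wd V E) k k \<ge> 0" .
  moreover have "ip V (wd V E) k k > 0" by (rule ip_pos_nz[OF nz])
  ultimately have y0: "y \<ge> 0" by (smt (verit) mult_neg_pos)
  define r where "r = sqrt y"
  have r2: "r * r = y" unfolding r_def using y0 by simp
  have r0: "r \<ge> 0" unfolding r_def using y0 by simp
  have rl: "r < 1/2"
  proof -
    have "r < sqrt (1/4)" unfolding r_def using y4 by (simp only: real_sqrt_less_iff)
    also have "sqrt (1/4) = (1/2::real)" by (simp add: real_sqrt_divide)
    finally show ?thesis .
  qed
  define g where "g x = Pop V E k x + r * k x" for x
  have Pg: "\<forall>x\<in>V. Pop V E g x = r * g x"
  proof
    fix x assume xV: "x \<in> V"
    have "Pop V E g x = Pop V E (Pop V E k) x + r * Pop V E k x"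
      unfolding g_def[abs_def] using Pop_lin[of 1 "Pop V E k" r k x] by simp
    also have "\<dots> = r * g x" using ev xV r2 unfolding g_def by (simp add: algebra_simps)
    finally show "Pop V E g x = r * g x" .
  qed
  show ?thesis
  proof (cases "\<exists>x\<in>V. g x \<noteq> 0")
    case True
    have "laplacian_eigenvalue V E (1 - r)" unfolding eig_iff using True Pg by auto
    then show ?thesis using r0 rl by (intro exI[of _ "1 - r"]) auto
  next
    case False
    have "\<forall>x\<in>V. Pop V E k x = (1 - (1 + r)) * k x"
    proof
      fix x assume "x \<in> V"
      then have "Pop V E k x + r * k x = 0" using False unfolding g_def by blast
      then show "Pop V E k x = (1 - (1 + r)) * k x" by (simp add: algebra_simps)
    qed
    then have "laplacian_eigenvalue V E (1 + r)" unfolding eig_iff using nz by blast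
    then show ?thesis using r0 rl by (intro exI[of _ "1 + r"]) auto
  qed
qed

lemma specA:
  assumes noe: "\<forall>mu. laplacian_eigenvalue V E mu \<longrightarrow> \<bar>1 - mu\<bar> \<ge> 1/2" and ne: "V \<noteq> {}"
  shows "ip V (wd V E) (Pop V E f) (Pop V E f) \<ge> 1/4 * ip V (wd V E) f f"
proof (rule ccontr)
  assume neg: "\<not> ?thesis"
  obtain h c where h: "\<exists>x\<in>V. h x \<noteq> 0" "\<forall>x\<in>V. kop V K2 h x = c * h x"
     "\<forall>f. ip V (wd V E) (kop V K2 f) f \<ge> c * ip V (wd V E) f f"
    using rayleigh_min[OF fin ne w1 K2_sym] by blast
  have "c * ip V (wd V E) f f \<le> ip V (wd V E) (Pop V E f) (Pop V E f)"
    using h(3) PP_ip[of f] unfolding K2_op by metis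
  also have "\<dots> < 1/4 * ip V (wd V E) f f" using neg by simp
  finally have "c * ip V (wd V E) f f < 1/4 * ip V (wd V E) f f" .
  moreover have "ip V (wd V E) f f \<ge> 0" by (rule ip_pos[OF fin wpos])
  ultimately have c4: "c < 1/4"
    by (metis mult_right_mono not_le)
  obtain mu where "laplacian_eigenvalue V E mu" "\<bar>1 - mu\<bar> < 1/2"
    using eig_from_sq[OF h(1) _ c4] h(2) unfolding K2_op by blast
  then show False using noe by force
qed

lemma ip_lin_left: "ip V w (\<lambda>x. a * f x + b * h x) g = a * ip V w f g + b * ip V w h g"
  unfolding ip_def by (simp add: sum.distrib sum_distrib_left algebra_simps)

definition KT where "KT = (\<lambda>x y. (-1) * kmul V K2 K2 x y + 1 * ((5/4) * K2 x y + (-1/4) * Kid x y))"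

lemma KT_sym: "\<forall>x\<in>V. \<forall>y\<in>V. wd V E x * KT x y = wd V E y * KT y x"
proof (intro ballI)
  fix x y assume xy: "x \<in> V" "y \<in> V"
  have a: "wd V E x * kmul V K2 K2 x y = wd V E y * kmul V K2 K2 y x"
    using kmul_sym[OF K2_sym] xy by blast
  have b: "wd V E x * K2 x y = wd V E y * K2 y x" using K2_sym xy by blast
  have c: "wd V E x * Kid x y = wd V E y * Kid y x" unfolding Kid_def by auto
  show "wd V E x * KT x y = wd V E y * KT y x"
    unfolding KT_def using a b c by (simp add: algebra_simps)
qed

lemma KT_F: "ip V (wd V E) (kop V KT g) g =
   5/4 * ip V (wd V E) (Pop V E g) (Pop V E g) - ip V (wd V E) (Pop V E (Pop V E g)) (Pop V E (Pop V E g))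
   - 1/4 * ip V (wd V E) g g"
proof -
  have e: "\<forall>x\<in>V. kop V KT g x = (-1) * kop V K2 (kop V K2 g) x + 1 * ((5/4) * kop V K2 g x + (-1/4) * g x)"
    unfolding KT_def kop_comb kop_kmul using kop_Kid[OF fin] by simp
  have "ip V (wd V E) (kop V KT g) g = ip V (wd V E) (\<lambda>x. (-1) * kop V K2 (kop V K2 g) x + 1 * ((5/4) * kop V K2 g x + (-1/4) * g x)) g"
    using e by (intro ip_cong) auto
  also have "\<dots> = - ip V (wd V E) (kop V K2 (kop V K2 g)) g + (5/4 * ip V (wd V E) (kop V K2 g) g - 1/4 * ip V (wd V E) g g)"
    unfolding ip_lin_left by simp
  also have "ip V (wd V E) (kop V K2 (kop V K2 g)) g = ip V (wd V E) (kop V K2 g) (kop V K2 g)"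
    by (rule ip_kop_sym[OF K2_sym])
  also have "ip V (wd V E) (kop V K2 g) g = ip V (wd V E) (Pop V E g) (Pop V E g)"
    unfolding K2_op[abs_def] by (rule PP_ip)
  finally show ?thesis unfolding K2_op[abs_def] by simp
qed

lemma specB:
  assumes noe: "\<forall>mu. laplacian_eigenvalue V E mu \<longrightarrow> \<bar>1 - mu\<bar> \<ge> 1/2" and ne: "V \<noteq> {}"
  shows "ip V (wd V E) (Pop V E (Pop V E g)) (Pop V E (Pop V E g))
     \<le> 5/4 * ip V (wd V E) (Pop V E g) (Pop V E g) - 1/4 * ip V (wd V E) g g"
proof (rule ccontr)
  assume neg: "\<not> ?thesis"
  obtain h c where h: "\<exists>x\<in>V. h x \<noteq> 0" "\<forall>x\<in>V. kop V KT h x = c * h x"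
     "\<forall>f. ip V (wd V E) (kop V KT f) f \<ge> c * ip V (wd V E) f f"
    using rayleigh_min[OF fin ne w1 KT_sym] by blast
  have "c * ip V (wd V E) g g \<le> ip V (wd V E) (kop V KT g) g" using h(3) by blast
  also have "\<dots> < 0" unfolding KT_F using neg by simp
  finally have "c * ip V (wd V E) g g < 0" .
  moreover have "ip V (wd V E) g g \<ge> 0" by (rule ip_pos[OF fin wpos])
  ultimately have c0: "c < 0" by (smt (verit) mult_nonneg_nonneg)
  define S where "S f x = Pop V E (Pop V E f) x" for f x
  have Slin: "S (\<lambda>x. a * f x + b * g x) x = a * S f x + b * S g x" for a b f g x
  proof -
    have "Pop V E (\<lambda>x. a * f x + b * g x) = (\<lambda>x. a * Pop V E f x + b * Pop V E g x)"
      by (intro ext) (rule Pop_lin)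
    then show ?thesis unfolding S_def by (simp add: Pop_lin)
  qed
  have eqh: "\<forall>x\<in>V. S (S h) x = 5/4 * S h x - (1/4 + c) * h x"
  proof
    fix x assume xV: "x \<in> V"
    have "kop V KT h x = (-1) * kop V K2 (kop V K2 h) x + 1 * ((5/4) * kop V K2 h x + (-1/4) * h x)"
      unfolding KT_def kop_comb kop_kmul using kop_Kid[OF fin xV] by simp
    then show "S (S h) x = 5/4 * S h x - (1/4 + c) * h x"
      using h(2) xV unfolding S_def K2_op[abs_def] by (simp add: algebra_simps)
  qed
  define q where "q = sqrt (9/16 - 4*c)"
  have q2: "q * q = 9/16 - 4*c" unfolding q_def using c0 by simp
  have q34: "q > 3/4"
  proof -
    have "sqrt (9/16) < q" unfolding q_def using c0 by (simp only: real_sqrt_less_iff)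
    moreover have "sqrt (9/16) = (3/4::real)" by (simp add: real_sqrt_divide)
    ultimately show ?thesis by simp
  qed
  define y1 where "y1 = (5/4 - q)/2"
  define y2 where "y2 = (5/4 + q)/2"
  have y12a: "y1 + y2 = 5/4" unfolding y1_def y2_def by (simp add: field_simps)
  have "y1 * y2 = (25/16 - q * q) / 4" unfolding y1_def y2_def by (simp add: field_simps)
  then have y12b: "y1 * y2 = 1/4 + c" using q2 by simp
  note y12 = y12a y12b
  define k where "k x = S h x - y2 * h x" for x
  have Sk: "\<forall>x\<in>V. S k x = y1 * k x"
  proof
    fix x assume xV: "x \<in> V"
    have "S k x = S (S h) x - y2 * S h x" unfolding k_def using Slin[of 1 "S h" "-y2" h x] by simp
    also have "\<dots> = 5/4 * S h x - (y1 * y2) * h x - y2 * S h x" using eqh xV y12 by simp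
    also have "\<dots> = (y1 + y2) * S h x - (y1 * y2) * h x - y2 * S h x" using y12 by simp
    also have "\<dots> = y1 * k x" unfolding k_def by (simp add: algebra_simps)
    finally show "S k x = y1 * k x" .
  qed
  show False
  proof (cases "\<exists>x\<in>V. k x \<noteq> 0")
    case True
    have "y1 < 1/4" unfolding y1_def using q34 by simp
    then obtain mu where "laplacian_eigenvalue V E mu" "\<bar>1 - mu\<bar> < 1/2"
      using eig_from_sq[OF True _] Sk unfolding S_def by blast
    then show False using noe by force
  next
    case False
    then have Sh: "\<forall>x\<in>V. S h x = y2 * h x" unfolding k_def by simp
    have "y2 * ip V (wd V E) h h = ip V (wd V E) (S h) h"
      using Sh ip_cong[of V "S h" "\<lambda>x. y2 * h x" h h "wd V E"] ip_scale_left by simp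
    also have "\<dots> = ip V (wd V E) (Pop V E h) (Pop V E h)" unfolding S_def[abs_def] by (rule PP_ip)
    also have "\<dots> \<le> ip V (wd V E) h h" by (rule Pop_contr)
    finally have "y2 * ip V (wd V E) h h \<le> 1 * ip V (wd V E) h h" by simp
    moreover have "ip V (wd V E) h h > 0" by (rule ip_pos_nz[OF h(1)])
    ultimately have "y2 \<le> 1" by (simp only: mult_le_cancel_right_pos)
    moreover have "y2 > 1" unfolding y2_def using q34 by simp
    ultimately show False by simp
  qed
qed

end


lemma arith_key:
  fixes p q :: nat assumes p3: "p \<ge> 3" and q3: "q \<ge> 3"
  shows "2*((1/real p+1/real q)/2)^2 + (real p+real q)/(4*(max (real p) (real q))^2)
          > 5/2*((1/real p+1/real q)/2) - 1/2"
proof -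
  define s where "s = (1/real p+1/real q)/2"
  have pos: "(real p+real q)/(4*(max (real p) (real q))^2) > 0" using p3 q3 by simp
  show ?thesis
  proof (cases "s \<le> 1/4")
    case True
    have "s \<le> 1" using True by simp
    have "2 * s^2 - 5/2 * s + 1/2 = 2 * (1/4 - s) * (1 - s)" by (simp add: field_simps power2_eq_square)
    also have "\<dots> \<ge> 0" using True by (intro mult_nonneg_nonneg) auto
    finally show ?thesis using pos unfolding s_def[symmetric] by simp
  next
    case False
    have small: "p < 6 \<and> q < 6 \<and> (p = 3 \<or> q = 3)"
    proof (rule ccontr)
      assume "\<not> ?thesis"
      then have "(p \<ge> 4 \<and> q \<ge> 4) \<or> p \<ge> 6 \<or> q \<ge> 6" using p3 q3 by auto
      moreover have "1/real p \<le> 1/3" "1/real q \<le> 1/3" using p3 q3 by (auto simp: field_simps)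
      ultimately have "1/real p + 1/real q \<le> 1/2"
      proof (elim disjE conjE)
        assume "p \<ge> 4" "q \<ge> 4"
        then have "1/real p \<le> 1/4" "1/real q \<le> 1/4" by (auto simp: field_simps)
        then show ?thesis by simp
      next
        assume "p \<ge> 6" then have "1/real p \<le> 1/6" by (auto simp: field_simps)
        then show ?thesis using \<open>1/real q \<le> 1/3\<close> by simp
      next
        assume "q \<ge> 6" then have "1/real q \<le> 1/6" by (auto simp: field_simps)
        then show ?thesis using \<open>1/real p \<le> 1/3\<close> by simp
      qed
      then show False using False unfolding s_def by simp
    qed
    then have "p \<in> {3,4,5} \<and> q \<in> {3,4,5}" using p3 q3 by auto
    then show ?thesis by (auto simp: power2_eq_square max_def)
  qed
qed

context gr begin

lemma Pdl:
  assumes uV: "u \<in> V"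
  shows "Pop V E (\<lambda>y. if y = u then 1 else 0) x = (if E x u then 1 else 0) / real (deg V E x)"
proof -
  have "(\<Sum>w\<in>nbhd V E x. if w = u then (1::real) else 0) = (if u \<in> nbhd V E x then 1 else 0)"
    using fin_nbhd by (simp add: sum.delta')
  also have "\<dots> = (if E x u then 1 else 0)" using uV unfolding nbhd_def by auto
  finally show ?thesis unfolding Pop_eq by simp
qed

lemma bad_contra:
  assumes noe: "\<forall>mu. laplacian_eigenvalue V E mu \<longrightarrow> \<bar>1 - mu\<bar> \<ge> 1/2"
    and vV: "v \<in> V" and nb: "nbhd V E v = {a, b}" and ab: "a \<noteq> b"
    and da3: "deg V E a \<ge> 3" and db3: "deg V E b \<ge> 3"
  shows False
proof -
  have ne: "V \<noteq> {}" using vV by blast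
  have aV: "a \<in> V" and bV: "b \<in> V" using nb nbhd_sub by auto
  have Eva: "E v a" and Evb: "E v b" using nb unfolding nbhd_def by auto
  define da where "da = real (deg V E a)"
  define db where "db = real (deg V E b)"
  have da3': "da \<ge> 3" "db \<ge> 3" unfolding da_def db_def using da3 db3 by auto
  define ia where "ia x = (if E x a then 1 else (0::real))" for x
  define ib where "ib x = (if E x b then 1 else (0::real))" for x
  define dl where "dl u = (\<lambda>y. if y = u then 1 else (0::real))" for u :: 'a
  have dpos': "real (deg V E x) > 0" if "x \<in> V" for x using dpos that by simp
  define f where "f y = 1 * dl a y + (-1) * dl b y" for y
  have Pf: "Pop V E f x = (ia x - ib x) / real (deg V E x)" for x
    unfolding f_def[abs_def] Pop_lin dl_def Pdl[OF aV] Pdl[OF bV] ia_def ib_def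
    by (simp add: diff_divide_distrib)
  have "ip V (wd V E) f f = (\<Sum>x\<in>V. (if x = a then real (deg V E a) else 0) + (if x = b then real (deg V E b) else 0))"
    unfolding ip_def f_def dl_def wd_def using ab by (intro sum.cong) auto
  also have "\<dots> = da + db" using aV bV fin unfolding da_def db_def by (simp add: sum.distrib)
  finally have ipff: "ip V (wd V E) f f = da + db" .
  define sig where "sig = (\<Sum>x\<in>V. (ia x - ib x)^2 / real (deg V E x))"
  have ipPf: "ip V (wd V E) (Pop V E f) (Pop V E f) = sig"
    unfolding ip_def sig_def Pf wd_def
    by (intro sum.cong refl) (use dpos' in \<open>simp add: power2_eq_square field_simps\<close>)
  have sigb: "sig \<ge> 1/4 * (da + db)"
    using specA[OF noe ne, of f] unfolding ipff ipPf .
  define g where "g = dl v"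
  have Pg: "Pop V E g x = (if E x v then 1 else 0) / real (deg V E x)" for x
    unfolding g_def dl_def by (rule Pdl[OF vV])
  have degv: "deg V E v = 2" unfolding deg_def nb using ab by simp
  have "ip V (wd V E) g g = (\<Sum>x\<in>V. if x = v then real (deg V E v) else 0)"
    unfolding ip_def g_def dl_def wd_def by (intro sum.cong) auto
  also have "\<dots> = 2" using vV fin degv by simp
  finally have ipgg: "ip V (wd V E) g g = 2" .
  have nbv: "{x\<in>V. E x v} = {a, b}" using nb Esym unfolding nbhd_def by blast
  have "ip V (wd V E) (Pop V E g) (Pop V E g) = (\<Sum>x\<in>V. if E x v then 1 / real (deg V E x) else 0)"
    unfolding ip_def Pg wd_def
    by (intro sum.cong refl) (use dpos in \<open>auto simp: power2_eq_square field_simps\<close>)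
  also have "\<dots> = (\<Sum>x\<in>{x\<in>V. E x v}. 1 / real (deg V E x))" by (rule sum.inter_filter[OF fin, symmetric])
  also have "\<dots> = 1/da + 1/db" unfolding nbv da_def db_def using ab by simp
  finally have ipPg: "ip V (wd V E) (Pop V E g) (Pop V E g) = 1/da + 1/db" .
  have PPg: "Pop V E (Pop V E g) x = (ia x / da + ib x / db) / real (deg V E x)" for x
  proof -
    have "(\<Sum>w\<in>nbhd V E x. Pop V E g w) = (\<Sum>w\<in>nbhd V E x. (if w = a then 1/da else 0) + (if w = b then 1/db else 0))"
    proof (intro sum.cong refl)
      fix w assume "w \<in> nbhd V E x"
      then have wV: "w \<in> V" using nbhd_sub by blast
      have "E w v \<longleftrightarrow> w = a \<or> w = b" using nbv wV by blast
      then show "Pop V E g w = (if w = a then 1/da else 0) + (if w = b then 1/db else 0)"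
        unfolding Pg da_def db_def using ab by auto
    qed
    also have "\<dots> = (if a \<in> nbhd V E x then 1/da else 0) + (if b \<in> nbhd V E x then 1/db else 0)"
      using fin_nbhd by (simp add: sum.distrib sum.delta')
    also have "\<dots> = ia x / da + ib x / db" unfolding ia_def ib_def nbhd_def using aV bV by auto
    finally show ?thesis unfolding Pop_eq[of "Pop V E g"] by simp
  qed
  define M where "M = max da db"
  have M3: "M \<ge> 3" unfolding M_def using da3' by simp
  define s where "s = (1/da + 1/db)/2"
  have tb: "wd V E x * Pop V E (Pop V E g) x * Pop V E (Pop V E g) x
      \<ge> (if x = v then 2 * s^2 else 0) + (ia x - ib x)^2 / real (deg V E x) / M^2" if xV: "x \<in> V" for x
  proof -
    have dx: "real (deg V E x) > 0" using dpos' xV .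
    have lhs: "wd V E x * Pop V E (Pop V E g) x * Pop V E (Pop V E g) x = (ia x / da + ib x / db)^2 / real (deg V E x)"
      unfolding PPg wd_def using dx by (simp add: power2_eq_square field_simps)
    show ?thesis
    proof (cases "x = v")
      case True
      have "ia x = 1" "ib x = 1" using True Eva Evb unfolding ia_def ib_def by auto
      then show ?thesis unfolding lhs using True degv unfolding s_def by (simp add: power2_eq_square field_simps)
    next
      case False
      have "(ia x - ib x)^2 / M^2 \<le> (ia x / da + ib x / db)^2"
      proof -
        have Mda: "1/M^2 \<le> (1/da)^2" "1/M^2 \<le> (1/db)^2" unfolding M_def using da3'
          by (auto simp: max_def power2_eq_square field_simps intro: mult_mono)
        show ?thesis unfolding ia_def ib_def using Mda by (auto simp: power_divide)
      qed
      then have "(ia x - ib x)^2 / M^2 / real (deg V E x) \<le> (ia x / da + ib x / db)^2 / real (deg V E x)"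
        using dx by (intro divide_right_mono) auto
      then show ?thesis unfolding lhs using False by (simp add: divide_divide_eq_left mult.commute)
    qed
  qed
  have "(\<Sum>x\<in>V. (if x = v then 2 * s^2 else 0) + (ia x - ib x)^2 / real (deg V E x) / M^2)
        \<le> ip V (wd V E) (Pop V E (Pop V E g)) (Pop V E (Pop V E g))"
    unfolding ip_def by (intro sum_mono tb)
  moreover have "(\<Sum>x\<in>V. (if x = v then 2 * s^2 else 0) + (ia x - ib x)^2 / real (deg V E x) / M^2) = 2 * s^2 + sig / M^2"
    using vV fin unfolding sig_def by (simp add: sum.distrib sum_divide_distrib)
  ultimately have lowA: "2 * s^2 + sig / M^2 \<le> ip V (wd V E) (Pop V E (Pop V E g)) (Pop V E (Pop V E g))" by simp
  have upA: "ip V (wd V E) (Pop V E (Pop V E g)) (Pop V E (Pop V E g)) \<le> 5/4 * (1/da + 1/db) - 1/4 * 2"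
    using specB[OF noe ne, of g] unfolding ipPg ipgg .
  have "sig / M^2 \<ge> (1/4 * (da + db)) / M^2" using sigb M3 by (intro divide_right_mono) auto
  then have "2 * s^2 + (da + db) / (4 * M^2) \<le> 5/2 * s - 1/2"
  proof -
    have e1: "5/4 * (1/da + 1/db) - 1/4 * 2 = 5/2 * s - 1/2" unfolding s_def by simp
    have e2: "(da + db) / (4 * M^2) = (1/4 * (da + db)) / M^2" by simp
    show ?thesis using lowA upA e1 e2 \<open>sig / M^2 \<ge> (1/4 * (da + db)) / M^2\<close> by linarith
  qed
  moreover have "2 * s^2 + (da + db) / (4 * M^2) > 5/2 * s - 1/2"
    using arith_key[OF da3 db3] unfolding s_def M_def da_def db_def .
  ultimately show False by simp
qed

end


theorem mainTheorem10:
  fixes V :: "'a set" and E :: "'a \<Rightarrow> 'a \<Rightarrow> bool"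
  assumes "simple_graph V E"
    and "connected_graph V E"
    and "\<forall>v\<in>V. deg V E v > 0"
    and "card V \<ge> 3"
    and "min_degree V E = 2"
    and "eps_gap V E = 1/2"
  shows "\<forall>v\<in>V. deg V E v = 2 \<longrightarrow> (\<exists>u\<in>nbhd V E v. deg V E u = 2)"
proof (intro ballI impI, rule ccontr)
  fix v assume vV: "v \<in> V" and dv: "deg V E v = 2" and no: "\<not> (\<exists>u\<in>nbhd V E v. deg V E u = 2)"
  interpret gr V E using assms(1,3) by unfold_locales
  have noe: "\<forall>mu. laplacian_eigenvalue V E mu \<longrightarrow> \<bar>1 - mu\<bar> \<ge> 1/2"
  proof (intro allI impI)
    fix mu assume "laplacian_eigenvalue V E mu"
    then have "eps_gap V E \<le> \<bar>1 - mu\<bar>" unfolding eps_gap_def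
      using eig_finite by (intro Min_le) auto
    then show "\<bar>1 - mu\<bar> \<ge> 1/2" using assms(6) by simp
  qed
  obtain a b where ab: "a \<noteq> b" and nb: "nbhd V E v = {a, b}"
    using dv unfolding deg_def by (auto simp: card_2_iff)
  have mind: "deg V E x \<ge> 2" if "x \<in> V" for x
  proof -
    have "min_degree V E \<le> deg V E x" unfolding min_degree_def using fin that by (intro Min_le) auto
    then show ?thesis using assms(5) by simp
  qed
  have aV: "a \<in> V" and bV: "b \<in> V" using nb nbhd_sub by auto
  have "deg V E a \<noteq> 2" "deg V E b \<noteq> 2" using no nb by auto
  then have "deg V E a \<ge> 3" "deg V E b \<ge> 3" using mind[OF aV] mind[OF bV] by linarith+
  then show False using bad_contra[OF noe vV nb ab] by blast
qed


end
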